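(* Let $\mathcal{I}=\{p(\mathbf{x})(1-\sum_{i=1}^n x_i):p\in\mathbb{R}[\mathbf{x}]\}$, equip $\mathbb{R}[\mathbf{x}]/\mathcal{I}$ with the norm $\|f\|=\sup_{\mathbf{x}\in\Delta_{n-1}}|f(\mathbf{x})|$, where $\Delta_{n-1}=\{\mathbf{x}\in\mathbb{R}^n_+:x_1+\dots+x_n=1\}$, and let $L:\mathbb{R}[\mathbf{x}]/\mathcal{I}\to\mathbb{R}$ be a linear operator with $L(\mathbf{x}^\alpha)\ge 0$ for all $\alpha\in\mathbb{N}^n$ and $L(1)\le 1$. Then $L$ is continuous with respect to $\|\cdot\|$.
   Context: $\mathbb{R}[\mathbf{x}]=\mathbb{R}[x_1,\dots,x_n]$; $\mathbf{x}^\alpha=x_1^{\alpha_1}\cdots x_n^{\alpha_n}$. *)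

theory Defs
  imports "HOL-Analysis.Analysis" "HOL-Library.Poly_Mapping"
begin

text \<open>Real polynomials in n variables, the variables indexed by a finite type 'n
  (so n = CARD('n)): a polynomial is a finitely supported map from exponent
  vectors alpha (finitely supported maps from the index type to nat) to real coefficients; the ring structure is
  the one of Poly_Mapping (convolution product).\<close>

type_synonym 'n rpoly = "('n \<Rightarrow>\<^sub>0 nat) \<Rightarrow>\<^sub>0 real"

definition monom_x :: "('n \<Rightarrow>\<^sub>0 nat) \<Rightarrow> 'n rpoly" where
  "monom_x \<alpha> = Poly_Mapping.single \<alpha> 1"

definition var_x :: "'n \<Rightarrow> 'n rpoly" where
  "var_x i = monom_x (Poly_Mapping.single i 1)"

definition peval :: "'n::finite rpoly \<Rightarrow> ('n \<Rightarrow> real) \<Rightarrow> real" where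
  "peval p x = (\<Sum>\<alpha>\<in>Poly_Mapping.keys p. Poly_Mapping.lookup p \<alpha> * (\<Prod>i\<in>UNIV. x i ^ Poly_Mapping.lookup \<alpha> i))"

definition pscale :: "real \<Rightarrow> 'n rpoly \<Rightarrow> 'n rpoly" where
  "pscale c p = Poly_Mapping.map (\<lambda>a. c * a) p"

definition simplex_ideal :: "'n::finite rpoly set" where
  "simplex_ideal = {p * (1 - (\<Sum>i\<in>UNIV. var_x i)) | p. True}"

definition std_simplex :: "('n::finite \<Rightarrow> real) set" where
  "std_simplex = {x. (\<forall>i. 0 \<le> x i) \<and> (\<Sum>i\<in>UNIV. x i) = 1}"

text \<open>The sup norm over the simplex (well defined on the quotient by simplex_ideal).\<close>
definition simplex_norm :: "'n::finite rpoly \<Rightarrow> real" where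
  "simplex_norm f = (SUP x\<in>std_simplex. \<bar>peval f x\<bar>)"

end

theory Submission
  imports Defs
begin

locale Lfun =
  fixes L :: "'n::finite rpoly \<Rightarrow> real"
  assumes add: "\<And>p q. L (p + q) = L p + L q"
    and scale: "\<And>c p. L (pscale c p) = c * L p"
    and quot: "\<And>p q. p - q \<in> simplex_ideal \<Longrightarrow> L p = L q"
    and mom_nonneg: "\<And>\<alpha>. L (monom_x \<alpha>) \<ge> 0"
begin

lemma L0: "L 0 = 0"
  using add[of 0 0] by simp

lemma L_sum: "L (sum f A) = (\<Sum>a\<in>A. L (f a))"
  by (induction A rule: infinite_finite_induct) (auto simp: L0 add)

lemma L_diff: "L (p - q) = L p - L q"
  using add[of "p - q" q] by simp

definition "ssum = (\<Sum>i\<in>UNIV. var_x i)"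

lemma L_spow: "L (p * ssum ^ N) = L p"
proof (rule quot)
  have "p * ssum ^ N - p = p * (ssum ^ N - 1)" by (simp add: algebra_simps)
  also have "\<dots> = (p * (- (\<Sum>i<N. ssum ^ i))) * (1 - ssum)"
    by (simp add: power_diff_1_eq algebra_simps)
  finally show "p * ssum ^ N - p \<in> simplex_ideal"
    unfolding simplex_ideal_def ssum_def by blast
qed

lemma L_spow1: "L (ssum ^ N) = L 1"
  using L_spow[of 1] by simp

lemma prod_monom: "finite A \<Longrightarrow> (\<Prod>q\<in>A. monom_x (\<beta> q)) = monom_x (\<Sum>q\<in>A. \<beta> q)"
  by (induction A rule: finite_induct) (auto simp: monom_x_def mult_single)

lemma prod_var: "finite A \<Longrightarrow> (\<Prod>q\<in>A. var_x (w q)) = monom_x (\<Sum>q\<in>A. Poly_Mapping.single (w q) 1)"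
  unfolding var_x_def by (rule prod_monom)

lemma L_prod_var_nonneg: "finite A \<Longrightarrow> L (\<Prod>q\<in>A. var_x (w q)) \<ge> 0"
  using prod_var mom_nonneg by metis

lemma L_one_nonneg: "L 1 \<ge> 0"
  using mom_nonneg[of 0] by (simp add: monom_x_def)

definition "W M = PiE {..<M::nat} (\<lambda>_. (UNIV :: 'n set))"
definition "mon M (w::nat\<Rightarrow>'n) = (\<Prod>q<M::nat. (var_x (w q) :: 'n rpoly))"
definition "freq M (w::nat\<Rightarrow>'n) i = real (card {q. q<M \<and> w q = i}) / real M"
definition "PP M k = PiE {..<k::nat} (\<lambda>_. {..<M::nat})"

lemma sum_mon_PiE:
  "finite A \<Longrightarrow> (\<Sum>w\<in>PiE A (S :: _ \<Rightarrow> 'n set). \<Prod>q\<in>A. var_x (w q)) = (\<Prod>q\<in>A. \<Sum>i\<in>S q. var_x i)"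
  by (rule prod_sum_PiE[symmetric]) (auto intro: finite_subset[OF subset_UNIV])

lemma finite_W: "finite (W M)"
  unfolding W_def by (intro finite_PiE) (auto intro: finite_subset[OF subset_UNIV])

lemma L_mon_nonneg: "L (mon M w) \<ge> 0"
  unfolding mon_def by (rule L_prod_var_nonneg) auto

lemma L_total: "(\<Sum>w\<in>W M. L (mon M w)) = L 1"
proof -
  have "(\<Sum>w\<in>W M. L (mon M w)) = L (\<Sum>w\<in>W M. mon M w)" by (simp add: L_sum)
  also have "(\<Sum>w\<in>W M. mon M w) = (\<Prod>q<M. \<Sum>i\<in>UNIV. var_x i)"
    unfolding W_def mon_def by (rule sum_mon_PiE) simp
  also have "\<dots> = ssum ^ M" by (simp add: ssum_def)
  finally show ?thesis using L_spow1 by simp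
qed

lemma count_eq:
  "(\<Prod>j<(k::nat). real (card {q. q<M \<and> (w :: nat \<Rightarrow> 'n) q = u j})) =
   (\<Sum>p\<in>PP M k. if (\<forall>j<k. w (p j) = u j) then 1 else 0)"
proof -
  have "(\<Prod>j<k. real (card {q. q<M \<and> w q = u j})) = real (card (PiE {..<k} (\<lambda>j. {q. q<M \<and> w q = u j})))"
    by (subst card_PiE) (auto simp: of_nat_prod)
  also have "PiE {..<k} (\<lambda>j. {q. q<M \<and> w q = u j}) = {p\<in>PP M k. \<forall>j<k. w (p j) = u j}"
    unfolding PP_def by (auto simp: PiE_def Pi_def)
  also have "real (card {p\<in>PP M k. \<forall>j<k. w (p j) = u j}) = (\<Sum>p\<in>{p\<in>PP M k. \<forall>j<k. w (p j) = u j}. 1)"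
    by simp
  also have "\<dots> = (\<Sum>p\<in>PP M k. if (\<forall>j<k. w (p j) = u j) then 1 else 0)"
    by (rule sum.inter_filter) (auto simp: PP_def intro!: finite_PiE)
  finally show ?thesis .
qed

definition "AA M (u :: nat \<Rightarrow> 'n) (k::nat) (p :: nat \<Rightarrow> nat) = (\<Sum>w\<in>W M. L (mon M w) * (if (\<forall>j<k. w (p j) = u j) then 1 else 0))"

lemma AA_nonneg: "AA M u k p \<ge> 0"
  unfolding AA_def by (intro sum_nonneg) (simp add: L_mon_nonneg)

lemma AA_le: "AA M u k p \<le> L 1"
  unfolding AA_def L_total[of M, symmetric]
  by (intro sum_mono) (simp add: L_mon_nonneg)

lemma AA_inj:
  assumes p: "p \<in> PP M k" and inj: "inj_on p {..<k}"
  shows "AA M u k p = L (\<Prod>j<k. var_x (u j))"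
proof -
  define S where "S q = (if q \<in> p ` {..<k} then {u (the_inv_into {..<k} p q)} else UNIV)" for q
  have pM: "j < k \<Longrightarrow> p j < M" for j using p by (auto simp: PP_def)
  have "AA M u k p = (\<Sum>w\<in>{w\<in>W M. \<forall>j<k. w (p j) = u j}. L (mon M w))"
    unfolding AA_def by (subst sum.inter_filter) (auto simp: finite_W intro!: sum.cong)
  also have "{w\<in>W M. \<forall>j<k. w (p j) = u j} = PiE {..<M} S"
  proof (intro set_eqI iffI)
    fix w assume w: "w \<in> {w\<in>W M. \<forall>j<k. w (p j) = u j}"
    show "w \<in> PiE {..<M} S"
    proof (rule PiE_I)
      fix q assume "q \<in> {..<M}"
      show "w q \<in> S q"
      proof (cases "q \<in> p ` {..<k}")
        case True
        then obtain j where j: "j < k" "q = p j" by auto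
        then show ?thesis using w inj by (auto simp: S_def the_inv_into_f_f)
      qed (auto simp: S_def)
    next
      fix q assume "q \<notin> {..<M}" then show "w q = undefined" using w by (auto simp: W_def)
    qed
  next
    fix w assume w: "w \<in> PiE {..<M} S"
    then have "w \<in> W M" by (auto simp: W_def PiE_def)
    moreover have "w (p j) = u j" if "j < k" for j
    proof -
      have "w (p j) \<in> S (p j)" using w pM[OF that] by (auto simp: PiE_def)
      then show ?thesis using that inj by (auto simp: S_def the_inv_into_f_f)
    qed
    ultimately show "w \<in> {w\<in>W M. \<forall>j<k. w (p j) = u j}" by auto
  qed
  also have "(\<Sum>w\<in>PiE {..<M} S. L (mon M w)) = L (\<Sum>w\<in>PiE {..<M} S. mon M w)"
    by (simp add: L_sum)
  also have "(\<Sum>w\<in>PiE {..<M} S. mon M w) = (\<Prod>q<M. \<Sum>i\<in>S q. var_x i)"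
    unfolding mon_def by (rule sum_mon_PiE) auto
  also have "\<dots> = (\<Prod>q\<in>{..<M} - p ` {..<k}. \<Sum>i\<in>S q. var_x i) * (\<Prod>q\<in>p ` {..<k}. \<Sum>i\<in>S q. var_x i)"
    by (rule prod.subset_diff) (auto simp: pM)
  also have "(\<Prod>q\<in>{..<M} - p ` {..<k}. \<Sum>i\<in>S q. var_x i) = ssum ^ card ({..<M} - p ` {..<k})"
    by (simp add: S_def ssum_def)
  also have "(\<Prod>q\<in>p ` {..<k}. \<Sum>i\<in>S q. var_x i) = (\<Prod>j<k. \<Sum>i\<in>S (p j). var_x i)"
    using inj by (simp add: prod.reindex)
  also have "\<dots> = (\<Prod>j<k. var_x (u j))"
    using inj by (intro prod.cong) (auto simp: S_def the_inv_into_f_f)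
  finally show ?thesis using L_spow by (simp add: mult.commute)
qed

lemma finite_PP: "finite (PP M k)"
  unfolding PP_def by (intro finite_PiE) auto

lemma card_PP: "card (PP M k) = M ^ k"
  unfolding PP_def by (subst card_PiE) auto

lemma card_Pinj: "card {p\<in>PP M k. inj_on p {..<k}} = (\<Prod>i<k. M - i)"
  unfolding PP_def using card_inj_on_subset_funcset[of "{..<k}" "{..<M}" "{..<k}"]
  by (simp add: atLeast0LessThan)

lemma word_sum_eq:
  fixes k :: nat and u :: "nat \<Rightarrow> 'n"
  assumes "M > 0"
  shows "(\<Sum>w\<in>W M. L (mon M w) * (\<Prod>j<k. freq M w (u j))) = (\<Sum>p\<in>PP M k. AA M u k p) / real M ^ k"
proof -
  have "(\<Sum>w\<in>W M. L (mon M w) * (\<Prod>j<k. freq M w (u j))) =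
        (\<Sum>w\<in>W M. L (mon M w) * (\<Sum>p\<in>PP M k. if (\<forall>j<k. w (p j) = u j) then 1 else 0) / real M ^ k)"
    by (intro sum.cong refl) (simp add: freq_def prod_dividef count_eq[symmetric])
  also have "\<dots> = (\<Sum>w\<in>W M. \<Sum>p\<in>PP M k. L (mon M w) * (if (\<forall>j<k. w (p j) = u j) then 1 else 0)) / real M ^ k"
    by (simp add: sum_divide_distrib sum_distrib_left)
  also have "\<dots> = (\<Sum>p\<in>PP M k. AA M u k p) / real M ^ k"
    unfolding AA_def by (subst sum.swap) simp
  finally show ?thesis .
qed

lemma word_lim:
  fixes k :: nat and u :: "nat \<Rightarrow> 'n"
  shows "(\<lambda>M. \<Sum>w\<in>W M. L (mon M w) * (\<Prod>j<k. freq M w (u j))) \<longlonglongrightarrow> L (\<Prod>j<k. var_x (u j))"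
proof -
  define T where "T = L (\<Prod>j<k. var_x (u j))"
  define r where "r M = (\<Prod>i<k. 1 - real i / real M)" for M :: nat
  define e where "e M = (\<Sum>p\<in>PP M k - {p\<in>PP M k. inj_on p {..<k}}. AA M u k p) / real M ^ k" for M
  have key: "(\<Sum>w\<in>W M. L (mon M w) * (\<Prod>j<k. freq M w (u j))) = r M * T + e M
      \<and> 0 \<le> e M \<and> e M \<le> (1 - r M) * L 1" if M: "M \<ge> max 1 k" for M
  proof -
    let ?I = "{p\<in>PP M k. inj_on p {..<k}}"
    have M0: "M > 0" using M by auto
    have Mk: "real M ^ k > 0" using M0 by simp
    have rM: "r M = real (card ?I) / real M ^ k"
    proof -
      have "real (card ?I) = (\<Prod>i<k. real M - real i)"
        unfolding card_Pinj of_nat_prod using M by (intro prod.cong) auto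
      moreover have "(\<Prod>i<k. real M - real i) / real M ^ k = (\<Prod>i<k. (real M - real i) / real M)"
        by (simp add: prod_dividef)
      moreover have "\<dots> = r M" unfolding r_def using M0 by (intro prod.cong) (auto simp: field_simps)
      ultimately show ?thesis by simp
    qed
    have split: "(\<Sum>p\<in>PP M k. AA M u k p) = (\<Sum>p\<in>PP M k - ?I. AA M u k p) + (\<Sum>p\<in>?I. AA M u k p)"
      by (rule sum.subset_diff) (auto simp: finite_PP)
    have "(\<Sum>p\<in>?I. AA M u k p) = real (card ?I) * T"
      unfolding T_def by (subst sum.cong[OF refl AA_inj]) auto
    then have eq: "(\<Sum>p\<in>PP M k. AA M u k p) / real M ^ k = r M * T + e M"
      unfolding split e_def rM by (simp add: add_divide_distrib)
    have cI: "card (PP M k - ?I) = M ^ k - card ?I"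
      by (subst card_Diff_subset) (auto simp: finite_PP card_PP)
    have cIle: "card ?I \<le> M ^ k"
      using card_mono[OF finite_PP, of ?I M k] by (auto simp: card_PP)
    have "(\<Sum>p\<in>PP M k - ?I. AA M u k p) \<le> (\<Sum>p\<in>PP M k - ?I. L 1)"
      by (intro sum_mono AA_le)
    also have "\<dots> = (real M ^ k - real (card ?I)) * L 1"
      using cI cIle by (simp add: of_nat_diff)
    finally have "e M \<le> (real M ^ k - real (card ?I)) * L 1 / real M ^ k"
      unfolding e_def using Mk by (simp add: divide_right_mono)
    also have "\<dots> = (1 - r M) * L 1" unfolding rM using Mk by (simp add: field_simps)
    finally have "e M \<le> (1 - r M) * L 1" .
    moreover have "0 \<le> e M" unfolding e_def using Mk by (intro divide_nonneg_pos sum_nonneg AA_nonneg) auto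
    ultimately show ?thesis using eq word_sum_eq[OF M0] by simp
  qed
  have r1: "r \<longlonglongrightarrow> 1"
  proof -
    have "r \<longlonglongrightarrow> (\<Prod>i<k. 1 - 0)"
      unfolding r_def by (intro tendsto_prod tendsto_diff tendsto_const lim_const_over_n)
    then show ?thesis by simp
  qed
  have ev: "eventually (\<lambda>M. M \<ge> max 1 k) sequentially" by (rule eventually_ge_at_top)
  have e0: "e \<longlonglongrightarrow> 0"
  proof (rule tendsto_sandwich[of "\<lambda>_. 0" _ _ "\<lambda>M. (1 - r M) * L 1"])
    show "eventually (\<lambda>M. 0 \<le> e M) sequentially" using ev by eventually_elim (use key in auto)
    show "eventually (\<lambda>M. e M \<le> (1 - r M) * L 1) sequentially" using ev by eventually_elim (use key in auto)
    have "(\<lambda>M. (1 - r M) * L 1) \<longlonglongrightarrow> (1 - 1) * L 1" by (intro tendsto_intros r1)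
    then show "(\<lambda>M. (1 - r M) * L 1) \<longlonglongrightarrow> 0" by simp
  qed simp
  have "(\<lambda>M. r M * T + e M) \<longlonglongrightarrow> 1 * T + 0" by (intro tendsto_intros r1 e0)
  then have "(\<lambda>M. r M * T + e M) \<longlonglongrightarrow> T" by simp
  then show ?thesis unfolding T_def[symmetric]
    by (rule Lim_transform_eventually) (use ev in \<open>eventually_elim, use key in auto\<close>)
qed

lemma exists_word_gen:
  fixes f :: "'n \<Rightarrow> nat"
  assumes "finite V"
  shows "\<exists>k (u::nat \<Rightarrow> 'n). \<forall>i. card {j. j<k \<and> u j = i} = (if i \<in> V then f i else 0)"
  using assms
proof (induction V rule: finite_induct)
  case empty
  show ?case by (rule exI[of _ 0]) auto
next
  case (insert a V)
  then obtain k :: nat and u :: "nat \<Rightarrow> 'n" where ku: "\<forall>i. card {j. j<k \<and> u j = i} = (if i \<in> V then f i else 0)" by blast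
  define u' where "u' j = (if j < k then u j else a)" for j
  have "card {j. j < k + f a \<and> u' j = i} = (if i \<in> insert a V then f i else 0)" for i
  proof -
    have eq: "{j. j < k + f a \<and> u' j = i} = {j. j<k \<and> u j = i} \<union> (if i = a then {k..<k + f a} else {})"
      by (auto simp: u'_def)
    have "card {j. j < k + f a \<and> u' j = i} = card {j. j<k \<and> u j = i} + card (if i = a then {k..<k + f a} else {})"
      unfolding eq by (rule card_Un_disjoint) auto
    then show ?thesis using ku insert(2) by auto
  qed
  then show ?case by blast
qed

lemma exists_word:
  fixes \<alpha> :: "'n \<Rightarrow>\<^sub>0 nat"
  shows "\<exists>k (u::nat \<Rightarrow> 'n). \<forall>i. card {j. j<k \<and> u j = i} = Poly_Mapping.lookup \<alpha> i"
  using exists_word_gen[of UNIV "Poly_Mapping.lookup \<alpha>"] by simp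

lemma prod_group_word:
  fixes f :: "'n \<Rightarrow> 'a::comm_monoid_mult" and u :: "nat \<Rightarrow> 'n"
  shows "(\<Prod>j<k. f (u j)) = (\<Prod>i\<in>UNIV. f i ^ card {j. j<k \<and> u j = i})"
proof -
  have "(\<Prod>j<k. f (u j)) = (\<Prod>i\<in>UNIV. \<Prod>j\<in>{j. j \<in> {..<k} \<and> u j = i}. f (u j))"
    by (rule prod.group[symmetric]) auto
  also have "\<dots> = (\<Prod>i\<in>UNIV. \<Prod>j\<in>{j. j \<in> {..<k} \<and> u j = i}. f i)"
    by (intro prod.cong) auto
  finally show ?thesis by simp
qed

lemma monom_word:
  fixes u :: "nat \<Rightarrow> 'n"
  assumes "\<forall>i. card {j. j<k \<and> u j = i} = Poly_Mapping.lookup \<alpha> i"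
  shows "monom_x \<alpha> = (\<Prod>j<k. var_x (u j))"
proof -
  have "\<alpha> = (\<Sum>j<k. Poly_Mapping.single (u j) 1)"
  proof (rule poly_mapping_eqI)
    fix i
    have "Poly_Mapping.lookup (\<Sum>j<k. Poly_Mapping.single (u j) 1) i = (\<Sum>j<k. if u j = i then 1 else 0)"
      by (simp add: lookup_sum lookup_single when_def)
    also have "\<dots> = card {j. j<k \<and> u j = i}"
      by (simp add: sum.If_cases Int_def conj_commute)
    finally show "Poly_Mapping.lookup \<alpha> i = Poly_Mapping.lookup (\<Sum>j<k. Poly_Mapping.single (u j) 1) i"
      using assms by simp
  qed
  then show ?thesis using prod_var[of "{..<k}" u] by simp
qed

lemma mono_lim:
  "(\<lambda>M. \<Sum>w\<in>W M. L (mon M w) * (\<Prod>i\<in>UNIV. freq M w i ^ Poly_Mapping.lookup \<alpha> i)) \<longlonglongrightarrow> L (monom_x \<alpha>)"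
proof -
  obtain k and u :: "nat \<Rightarrow> 'n" where ku: "\<forall>i. card {j. j<k \<and> u j = i} = Poly_Mapping.lookup \<alpha> i"
    using exists_word by blast
  have "(\<Prod>i\<in>UNIV. freq M w i ^ Poly_Mapping.lookup \<alpha> i) = (\<Prod>j<k. freq M w (u j))" for M w
    using prod_group_word[where f="freq M w" and k=k and u=u] ku by simp
  then show ?thesis using word_lim[where k=k and u=u] monom_word[OF ku] by simp
qed

lemma poly_decomp: "(h::'n rpoly) = (\<Sum>\<alpha>\<in>Poly_Mapping.keys h. pscale (Poly_Mapping.lookup h \<alpha>) (monom_x \<alpha>))"
proof (rule poly_mapping_eqI)
  fix b
  have "Poly_Mapping.lookup (\<Sum>\<alpha>\<in>Poly_Mapping.keys h. pscale (Poly_Mapping.lookup h \<alpha>) (monom_x \<alpha>)) b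
      = (\<Sum>\<alpha>\<in>Poly_Mapping.keys h. if \<alpha> = b then Poly_Mapping.lookup h \<alpha> else 0)"
    by (simp add: lookup_sum pscale_def monom_x_def lookup_single when_def)
  also have "\<dots> = Poly_Mapping.lookup h b"
    by (simp add: in_keys_iff)
  finally show "Poly_Mapping.lookup h b = Poly_Mapping.lookup (\<Sum>\<alpha>\<in>Poly_Mapping.keys h. pscale (Poly_Mapping.lookup h \<alpha>) (monom_x \<alpha>)) b"
    by simp
qed

lemma L_decomp: "L h = (\<Sum>\<alpha>\<in>Poly_Mapping.keys h. Poly_Mapping.lookup h \<alpha> * L (monom_x \<alpha>))"
  by (subst poly_decomp) (simp add: L_sum scale)

definition "mu M h = (\<Sum>w\<in>W M. L (mon M w) * peval h (freq M w))"

lemma poly_lim: "(\<lambda>M. mu M h) \<longlonglongrightarrow> L h"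
proof -
  have "mu M h = (\<Sum>\<alpha>\<in>Poly_Mapping.keys h. Poly_Mapping.lookup h \<alpha> *
     (\<Sum>w\<in>W M. L (mon M w) * (\<Prod>i\<in>UNIV. freq M w i ^ Poly_Mapping.lookup \<alpha> i)))" for M
    unfolding mu_def peval_def
    by (simp add: sum_distrib_left sum_distrib_right mult_ac sum.swap[where B="Poly_Mapping.keys h"])
  moreover have "(\<lambda>M. \<Sum>\<alpha>\<in>Poly_Mapping.keys h. Poly_Mapping.lookup h \<alpha> *
     (\<Sum>w\<in>W M. L (mon M w) * (\<Prod>i\<in>UNIV. freq M w i ^ Poly_Mapping.lookup \<alpha> i)))
     \<longlonglongrightarrow> (\<Sum>\<alpha>\<in>Poly_Mapping.keys h. Poly_Mapping.lookup h \<alpha> * L (monom_x \<alpha>))"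
    by (intro tendsto_sum tendsto_mult tendsto_const mono_lim)
  ultimately show ?thesis by (simp add: L_decomp[symmetric])
qed

end

lemma simplex_le1: "x \<in> std_simplex \<Longrightarrow> \<bar>x i\<bar> \<le> 1"
proof -
  assume x: "x \<in> std_simplex"
  then have "x i \<le> (\<Sum>j\<in>UNIV. x j)" by (intro member_le_sum) (auto simp: std_simplex_def)
  then show ?thesis using x by (auto simp: std_simplex_def)
qed

lemma peval_bound: "x \<in> std_simplex \<Longrightarrow> \<bar>peval h x\<bar> \<le> (\<Sum>\<alpha>\<in>Poly_Mapping.keys h. \<bar>Poly_Mapping.lookup h \<alpha>\<bar>)"
proof -
  assume x: "x \<in> std_simplex"
  have "\<bar>peval h x\<bar> \<le> (\<Sum>\<alpha>\<in>Poly_Mapping.keys h. \<bar>Poly_Mapping.lookup h \<alpha> * (\<Prod>i\<in>UNIV. x i ^ Poly_Mapping.lookup \<alpha> i)\<bar>)"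
    unfolding peval_def by (rule sum_abs)
  also have "\<dots> \<le> (\<Sum>\<alpha>\<in>Poly_Mapping.keys h. \<bar>Poly_Mapping.lookup h \<alpha>\<bar>)"
  proof (intro sum_mono)
    fix \<alpha>
    have "\<bar>\<Prod>i\<in>UNIV. x i ^ Poly_Mapping.lookup \<alpha> i\<bar> \<le> 1"
      unfolding abs_prod power_abs
      by (intro prod_le_1 conjI power_le_one simplex_le1[OF x] zero_le_power abs_ge_zero)
    then show "\<bar>Poly_Mapping.lookup h \<alpha> * (\<Prod>i\<in>UNIV. x i ^ Poly_Mapping.lookup \<alpha> i)\<bar> \<le> \<bar>Poly_Mapping.lookup h \<alpha>\<bar>"
      unfolding abs_mult by (simp add: mult_left_le)
  qed
  finally show ?thesis .
qed

lemma le_simplex_norm: "x \<in> std_simplex \<Longrightarrow> \<bar>peval h x\<bar> \<le> simplex_norm h"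
  unfolding simplex_norm_def
  by (rule cSUP_upper) (auto intro: bdd_aboveI2 peval_bound)

lemma simplex_nonempty: "(\<lambda>i. if i = (undefined::'n::finite) then 1 else 0) \<in> std_simplex"
  by (simp add: std_simplex_def)

lemma simplex_norm_nonneg: "simplex_norm (h::'n::finite rpoly) \<ge> 0"
  using le_simplex_norm[OF simplex_nonempty, of h] by linarith

context Lfun
begin

lemma freq_simplex: "M > 0 \<Longrightarrow> freq M w \<in> std_simplex"
proof -
  assume M: "M > 0"
  have "(\<Sum>i\<in>UNIV. real (card {q. q<M \<and> w q = i})) = (\<Sum>i\<in>UNIV. \<Sum>q\<in>{q. q \<in> {..<M} \<and> w q = i}. 1)"
    by simp
  also have "\<dots> = (\<Sum>q<M. 1)" by (rule sum.group) auto
  finally show ?thesis using M unfolding std_simplex_def freq_def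
    by (simp add: sum_divide_distrib[symmetric])
qed

lemma mu_bound: "M > 0 \<Longrightarrow> \<bar>mu M h\<bar> \<le> L 1 * simplex_norm h"
proof -
  assume M: "M > 0"
  have "\<bar>mu M h\<bar> \<le> (\<Sum>w\<in>W M. \<bar>L (mon M w) * peval h (freq M w)\<bar>)"
    unfolding mu_def by (rule sum_abs)
  also have "\<dots> \<le> (\<Sum>w\<in>W M. L (mon M w) * simplex_norm h)"
    by (intro sum_mono) (simp add: abs_mult L_mon_nonneg mult_left_mono le_simplex_norm freq_simplex M)
  also have "\<dots> = L 1 * simplex_norm h" by (simp add: sum_distrib_right[symmetric] L_total)
  finally show ?thesis .
qed

lemma L_bound: "\<bar>L h\<bar> \<le> L 1 * simplex_norm h"
proof (rule tendsto_le[OF _ tendsto_const])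
  show "(\<lambda>M. \<bar>mu M h\<bar>) \<longlonglongrightarrow> \<bar>L h\<bar>" by (intro tendsto_rabs poly_lim)
  show "eventually (\<lambda>M. \<bar>mu M h\<bar> \<le> L 1 * simplex_norm h) sequentially"
    using eventually_gt_at_top[of 0] by eventually_elim (rule mu_bound)
qed simp

end

theorem lemma4:
  fixes L :: "'n::finite rpoly \<Rightarrow> real"
  assumes add: "\<And>p q. L (p + q) = L p + L q"
    and scale: "\<And>c p. L (pscale c p) = c * L p"
    and quot: "\<And>p q. p - q \<in> simplex_ideal \<Longrightarrow> L p = L q"
    and mom_nonneg: "\<And>\<alpha>. L (monom_x \<alpha>) \<ge> 0"
    and one: "L 1 \<le> 1"
  shows "\<forall>f. \<forall>\<epsilon>>0. \<exists>\<delta>>0. \<forall>g. simplex_norm (g - f) < \<delta> \<longrightarrow> \<bar>L g - L f\<bar> < \<epsilon>"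
proof (intro allI impI)
  fix f and \<epsilon> :: real assume e: "\<epsilon> > 0"
  interpret Lfun L using add scale quot mom_nonneg by unfold_locales
  show "\<exists>\<delta>>0. \<forall>g. simplex_norm (g - f) < \<delta> \<longrightarrow> \<bar>L g - L f\<bar> < \<epsilon>"
  proof (intro exI[of _ \<epsilon>] conjI allI impI e)
    fix g assume g: "simplex_norm (g - f) < \<epsilon>"
    have "\<bar>L g - L f\<bar> = \<bar>L (g - f)\<bar>" by (simp add: L_diff)
    also have "\<dots> \<le> L 1 * simplex_norm (g - f)" by (rule L_bound)
    also have "\<dots> \<le> simplex_norm (g - f)"
      using one simplex_norm_nonneg[of "g - f"] by (simp add: mult_left_le_one_le L_one_nonneg)
    finally show "\<bar>L g - L f\<bar> < \<epsilon>" using g by simp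
  qed
qed

end
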